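(* Let $\mathcal{D}$ be a set, $\Sigma$ a finite set and $R\subseteq\mathcal{D}^\Sigma$. Suppose one of the following holds: (i) $R\neq\mathcal{D}^\Sigma$, but $\pi_\Lambda R=\mathcal{D}^\Lambda$ for every non-empty proper subset $\emptyset\subset\Lambda\subset\Sigma$; (ii) $\neg R$ is non-empty, but $\pi_{\{i\}}(\neg R)\neq\mathcal{D}$ for every $i\in\Sigma$. Then $R$ is join irreducible.
   Context: Attributed relation: $R\subseteq\mathcal{D}^\Sigma$, $\Sigma$ finite; $\pi_\Lambda R=\{a|_\Lambda:a\in R\}$; $\neg R=\mathcal{D}^\Sigma\setminus R$. The join of $R_i\subseteq\mathcal{D}^{\Lambda_i}$ is $R_1\Join\dots\Join R_m=\{a\in\mathcal{D}^{\cup_i\Lambda_i}: a|_{\Lambda_i}\in R_i\ \forall i\}$. $R$ is join reducible if $R=R^{\Lambda_1}\Join\dots\Join R^{\Lambda_m}$ for some cover $\Sigma=\Lambda_1\cup\dots\cup\Lambda_m$ with $R^{\Lambda_i}\subseteq\mathcal{D}^{\Lambda_i}$ and $0<|\Lambda_i|<|\Sigma|$; otherwise join irreducible. *)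

theory Defs
  imports "HOL-Library.FuncSet"
begin

text \<open>Tuples over attribute set Sigma with values in D are the extensional
functions in PiE Sigma (\<lambda>_. D); restriction a|Lambda is restrict a Lambda.\<close>

definition proj :: "'i set \<Rightarrow> ('i \<Rightarrow> 'd) set \<Rightarrow> ('i \<Rightarrow> 'd) set" where
  "proj \<Lambda> R = (\<lambda>a. restrict a \<Lambda>) ` R"

definition rel_neg :: "'d set \<Rightarrow> 'i set \<Rightarrow> ('i \<Rightarrow> 'd) set \<Rightarrow> ('i \<Rightarrow> 'd) set" where
  "rel_neg D \<Sigma> R = (\<Pi>\<^sub>E i\<in>\<Sigma>. D) - R"

definition rel_join :: "'d set \<Rightarrow> nat \<Rightarrow> (nat \<Rightarrow> 'i set) \<Rightarrow> (nat \<Rightarrow> ('i \<Rightarrow> 'd) set) \<Rightarrow> ('i \<Rightarrow> 'd) set" where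
  "rel_join D m Ls Rs = {a \<in> (\<Pi>\<^sub>E i\<in>(\<Union>k<m. Ls k). D). \<forall>k<m. restrict a (Ls k) \<in> Rs k}"

definition join_reducible :: "'d set \<Rightarrow> 'i set \<Rightarrow> ('i \<Rightarrow> 'd) set \<Rightarrow> bool" where
  "join_reducible D \<Sigma> R \<longleftrightarrow>
     (\<exists>m Ls Rs. (\<Union>k<m. Ls k) = \<Sigma> \<and>
        (\<forall>k<m. Rs k \<subseteq> (\<Pi>\<^sub>E i\<in>Ls k. D) \<and> 0 < card (Ls k) \<and> card (Ls k) < card \<Sigma>) \<and>
        R = rel_join D m Ls Rs)"

definition join_irreducible :: "'d set \<Rightarrow> 'i set \<Rightarrow> ('i \<Rightarrow> 'd) set \<Rightarrow> bool" where
  "join_irreducible D \<Sigma> R \<longleftrightarrow> \<not> join_reducible D \<Sigma> R"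

end

theory Submission
  imports Defs
begin

theorem theorem16:
  fixes D :: "'d set" and \<Sigma> :: "'i set" and R :: "('i \<Rightarrow> 'd) set"
  assumes "finite \<Sigma>"
    and "R \<subseteq> (\<Pi>\<^sub>E i\<in>\<Sigma>. D)"
    and "(R \<noteq> (\<Pi>\<^sub>E i\<in>\<Sigma>. D) \<and>
          (\<forall>\<Lambda>. {} \<subset> \<Lambda> \<and> \<Lambda> \<subset> \<Sigma> \<longrightarrow> proj \<Lambda> R = (\<Pi>\<^sub>E i\<in>\<Lambda>. D)))
         \<or> (rel_neg D \<Sigma> R \<noteq> {} \<and>
          (\<forall>i\<in>\<Sigma>. proj {i} (rel_neg D \<Sigma> R) \<noteq> (\<Pi>\<^sub>E j\<in>{i}. D)))"
  shows "join_irreducible D \<Sigma> R"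
  unfolding join_irreducible_def join_reducible_def
proof
  assume "\<exists>m Ls Rs. (\<Union>k<m. Ls k) = \<Sigma> \<and>
        (\<forall>k<m. Rs k \<subseteq> (\<Pi>\<^sub>E i\<in>Ls k. D) \<and> 0 < card (Ls k) \<and> card (Ls k) < card \<Sigma>) \<and>
        R = rel_join D m Ls Rs"
  then obtain m Ls Rs where U: "(\<Union>k<m. Ls k) = \<Sigma>"
    and P: "\<And>k. k<m \<Longrightarrow> Rs k \<subseteq> (\<Pi>\<^sub>E i\<in>Ls k. D) \<and> 0 < card (Ls k) \<and> card (Ls k) < card \<Sigma>"
    and RJ: "R = rel_join D m Ls Rs" by blast
  have mem: "a \<in> R \<longleftrightarrow> a \<in> (\<Pi>\<^sub>E i\<in>\<Sigma>. D) \<and> (\<forall>k<m. restrict a (Ls k) \<in> Rs k)" for a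
    using RJ U unfolding rel_join_def by auto
  have sub: "Ls k \<subseteq> \<Sigma>" if "k < m" for k using U that by blast
  have prp: "Ls k \<subset> \<Sigma>" "Ls k \<noteq> {}" if "k < m" for k
    using P[OF that] sub[OF that] by auto
  show False
  proof (cases "m = 0")
    case True
    then have "\<Sigma> = {}" using U by auto
    then have "R = (\<Pi>\<^sub>E i\<in>\<Sigma>. D)" using mem True by auto
    then show False using assms(3) unfolding rel_neg_def by auto
  next
    case False
    from assms(3) show False
    proof
      assume A: "R \<noteq> (\<Pi>\<^sub>E i\<in>\<Sigma>. D) \<and>
          (\<forall>\<Lambda>. {} \<subset> \<Lambda> \<and> \<Lambda> \<subset> \<Sigma> \<longrightarrow> proj \<Lambda> R = (\<Pi>\<^sub>E i\<in>\<Lambda>. D))"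
      have full: "(\<Pi>\<^sub>E i\<in>Ls k. D) \<subseteq> Rs k" if "k < m" for k
      proof
        fix b assume b: "b \<in> (\<Pi>\<^sub>E i\<in>Ls k. D)"
        have "proj (Ls k) R = (\<Pi>\<^sub>E i\<in>Ls k. D)" using A prp[OF that] by blast
        with b have "b \<in> (\<lambda>a. restrict a (Ls k)) ` R" unfolding proj_def by simp
        then obtain a where "a \<in> R" "b = restrict a (Ls k)" by (rule imageE)
        then show "b \<in> Rs k" using mem that by auto
      qed
      have "(\<Pi>\<^sub>E i\<in>\<Sigma>. D) \<subseteq> R"
      proof
        fix a assume a: "a \<in> (\<Pi>\<^sub>E i\<in>\<Sigma>. D)"
        have "restrict a (Ls k) \<in> Rs k" if "k < m" for k
        proof -
          have "restrict a (Ls k) \<in> (\<Pi>\<^sub>E i\<in>Ls k. D)"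
            unfolding restrict_PiE_iff using a sub[OF that] PiE_mem by blast
          then show ?thesis using full[OF that] by blast
        qed
        then show "a \<in> R" using mem a by auto
      qed
      then show False using A assms(2) by auto
    next
      assume A: "rel_neg D \<Sigma> R \<noteq> {} \<and>
          (\<forall>i\<in>\<Sigma>. proj {i} (rel_neg D \<Sigma> R) \<noteq> (\<Pi>\<^sub>E j\<in>{i}. D))"
      have dex: "\<exists>d\<in>D. \<forall>c\<in>rel_neg D \<Sigma> R. c i \<noteq> d" if "i \<in> \<Sigma>" for i
      proof (rule ccontr)
        assume "\<not> ?thesis"
        then have H: "\<forall>d\<in>D. \<exists>c\<in>rel_neg D \<Sigma> R. c i = d" by blast
        have "proj {i} (rel_neg D \<Sigma> R) = (\<Pi>\<^sub>E j\<in>{i}. D)"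
        proof
          show "proj {i} (rel_neg D \<Sigma> R) \<subseteq> (\<Pi>\<^sub>E j\<in>{i}. D)"
            using that unfolding proj_def rel_neg_def restrict_PiE_iff image_def
            by (smt (verit) DiffD1 PiE_mem insert_subset mem_Collect_eq restrict_PiE_iff subsetI empty_subsetI singletonD)
        next
          show "(\<Pi>\<^sub>E j\<in>{i}. D) \<subseteq> proj {i} (rel_neg D \<Sigma> R)"
          proof
            fix f assume f: "f \<in> (\<Pi>\<^sub>E j\<in>{i}. D)"
            then obtain c where c: "c \<in> rel_neg D \<Sigma> R" "c i = f i" using H by auto
            have "f = restrict c {i}"
            proof
              fix x show "f x = restrict c {i} x"
                using f c(2) by (cases "x = i") (auto simp: PiE_def extensional_def)
            qed
            then show "f \<in> proj {i} (rel_neg D \<Sigma> R)" using c(1) unfolding proj_def by blast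
          qed
        qed
        then show False using A that by blast
      qed
      obtain b where b: "b \<in> (\<Pi>\<^sub>E i\<in>\<Sigma>. D)" "b \<notin> R" using A unfolding rel_neg_def by auto
      then obtain k where k: "k < m" "restrict b (Ls k) \<notin> Rs k" using mem by blast
      obtain j where j: "j \<in> \<Sigma>" "j \<notin> Ls k" using prp(1)[OF k(1)] by blast
      obtain d where d: "d \<in> D" "\<forall>c\<in>rel_neg D \<Sigma> R. c j \<noteq> d" using dex[OF j(1)] by blast
      define a where "a = b(j := d)"
      have aP: "a \<in> (\<Pi>\<^sub>E i\<in>\<Sigma>. D)" using PiE_fun_upd[OF _ b(1), of d j] d(1) j(1) unfolding a_def
        by (metis insert_absorb)
      have "a j = d" unfolding a_def by simp
      then have "a \<notin> rel_neg D \<Sigma> R" using d(2) by blast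
      then have "a \<in> R" using aP unfolding rel_neg_def by blast
      then have "\<forall>k<m. restrict a (Ls k) \<in> Rs k" using mem[of a] by blast
      then have "restrict a (Ls k) \<in> Rs k" using k(1) by blast
      moreover have "restrict a (Ls k) = restrict b (Ls k)"
        unfolding a_def using j(2) by (intro restrict_ext) auto
      ultimately show False using k(2) by simp
    qed
  qed
qed

end
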